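(* Let $\Omega$ be a finite search space, let $\mathcal{B}$ be a finite nonempty set of information resources, and let $t\subseteq\Omega$ be a fixed target set of size $k$ with indicator vector $\mathbf{t}\in\{0,1\}^{|\Omega|}$. Fix an algorithm $\mathcal{A}$ and let $\phi(t,f)$ be a decomposable probability-of-success metric for $\mathcal{A}$ on the search problem $(\Omega,t,f)$. For $q_{\min}\in(0,1]$ define $\mathcal{B}_{q_{\min}}=\{f\mid f\in\mathcal{B},\ \phi(t,f)\ge q_{\min}\}$. Then $$\frac{|\mathcal{B}_{q_{\min}}|}{|\mathcal{B}|}\le\frac{p+\mathrm{Bias}(\mathcal{B},\mathbf{t})}{q_{\min}},\qquad p=\frac{k}{|\Omega|}.$$
   Context: A probability-of-success metric $\phi$ assigns to each target set $t\subseteq\Omega$ and information resource $f$ a success probability $\phi(t,f)$. It is decomposable if for each $f$ there exists a probability vector $\mathbf{P}_{\phi,f}\in\mathbb{R}^{|\Omega|}$ (nonnegative entries summing to $1$), not a function of $t$, such that $\phi(t,f)=\mathbf{t}^\top\mathbf{P}_{\phi,f}$ for all $t$. For a distribution $\mathcal{D}$ over information resources with $F\sim\mathcal{D}$ and a $k$-hot target vector $\mathbf{t}$, $\mathrm{Bias}(\mathcal{D},\mathbf{t})=\mathbb{E}_{\mathcal{D}}[\mathbf{t}^\top\mathbf{P}_{\phi,F}]-\frac{k}{|\Omega|}$; $\mathrm{Bias}(\mathcal{B},\mathbf{t})$ denotes this quantity for $\mathcal{D}$ the uniform distribution on $\mathcal{B}$. *)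

theory Defs
  imports "HOL-Analysis.Analysis"
begin

definition prob_vector :: "'a set \<Rightarrow> ('a \<Rightarrow> real) \<Rightarrow> bool" where
  "prob_vector Omega P \<longleftrightarrow> (\<forall>w\<in>Omega. 0 \<le> P w) \<and> (\<Sum>w\<in>Omega. P w) = 1"

text \<open>For a target set t (subset of Omega), the inner product of its indicator vector with P.\<close>
definition target_dot :: "'a set \<Rightarrow> ('a \<Rightarrow> real) \<Rightarrow> real" where
  "target_dot t P = (\<Sum>w\<in>t. P w)"

definition decomposable :: "'a set \<Rightarrow> ('a set \<Rightarrow> 'f \<Rightarrow> real) \<Rightarrow> bool" where
  "decomposable Omega phi \<longleftrightarrow>
     (\<forall>f. \<exists>P. prob_vector Omega P \<and> (\<forall>t. t \<subseteq> Omega \<longrightarrow> phi t f = target_dot t P))"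

definition Pvec :: "'a set \<Rightarrow> ('a set \<Rightarrow> 'f \<Rightarrow> real) \<Rightarrow> 'f \<Rightarrow> ('a \<Rightarrow> real)" where
  "Pvec Omega phi f = (SOME P. prob_vector Omega P \<and> (\<forall>t. t \<subseteq> Omega \<longrightarrow> phi t f = target_dot t P))"

definition Bias :: "'a set \<Rightarrow> ('a set \<Rightarrow> 'f \<Rightarrow> real) \<Rightarrow> 'f set \<Rightarrow> 'a set \<Rightarrow> real" where
  "Bias Omega phi B t =
     (\<Sum>f\<in>B. target_dot t (Pvec Omega phi f)) / real (card B) - real (card t) / real (card Omega)"

end

theory Submission
  imports Defs
begin

theorem theorem6:
  fixes Omega :: "'a set" and B :: "'f set" and t :: "'a set"
    and phi :: "'a set \<Rightarrow> 'f \<Rightarrow> real" and qmin :: real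
  assumes "finite Omega" and "Omega \<noteq> {}"
    and "finite B" and "B \<noteq> {}"
    and "t \<subseteq> Omega"
    and "decomposable Omega phi"
    and "0 < qmin" and "qmin \<le> 1"
  shows "real (card {f \<in> B. phi t f \<ge> qmin}) / real (card B)
           \<le> (real (card t) / real (card Omega) + Bias Omega phi B t) / qmin"
proof -
  have P: "prob_vector Omega (Pvec Omega phi f) \<and> phi t f = target_dot t (Pvec Omega phi f)" for f
  proof -
    from assms(6) obtain P where "prob_vector Omega P \<and> (\<forall>t. t \<subseteq> Omega \<longrightarrow> phi t f = target_dot t P)"
      unfolding decomposable_def by blast
    hence "prob_vector Omega (Pvec Omega phi f) \<and> (\<forall>t. t \<subseteq> Omega \<longrightarrow> phi t f = target_dot t (Pvec Omega phi f))"
      unfolding Pvec_def by (rule someI[where P="\<lambda>P. prob_vector Omega P \<and> (\<forall>t. t \<subseteq> Omega \<longrightarrow> phi t f = target_dot t P)"])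
    thus ?thesis using assms(5) by blast
  qed
  have nn: "0 \<le> phi t f" for f
    using P[of f] assms(5) unfolding prob_vector_def target_dot_def
    by (metis subsetD sum_nonneg)
  define S where "S = {f \<in> B. phi t f \<ge> qmin}"
  have fS: "finite S" "S \<subseteq> B" using assms(3) by (auto simp: S_def)
  have "qmin * real (card S) = (\<Sum>f\<in>S. qmin)" by simp
  also have "\<dots> \<le> (\<Sum>f\<in>S. phi t f)" by (rule sum_mono) (auto simp: S_def)
  also have "\<dots> \<le> (\<Sum>f\<in>B. phi t f)" by (rule sum_mono2[OF assms(3) fS(2)]) (simp add: nn)
  finally have m: "qmin * real (card S) \<le> (\<Sum>f\<in>B. phi t f)" .
  have cB: "real (card B) > 0" using assms(3,4) by (simp add: card_gt_0_iff)
  have rhs: "real (card t) / real (card Omega) + Bias Omega phi B t = (\<Sum>f\<in>B. phi t f) / real (card B)"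
    unfolding Bias_def using P by simp
  show ?thesis unfolding rhs S_def[symmetric] using m cB assms(7)
    by (simp add: field_simps)
qed

end
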